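(* Let $a_{n,k}$ denote the number of matchings of size $n$ containing exactly $k$ occurrences of the endhered pattern $21$. For any integers $n>k\ge0$, $$a_{n,k}=\binom{n-1}{k}a_{n-k,0}.$$
   Context: A matching of size $n$ is a set of $n$ arcs $(a,b)$ with $1\le a<b\le 2n$ such that each point of $\{1,\dots,2n\}$ belongs to exactly one arc. An occurrence of the endhered pattern $21$ in a matching $\mu$ is a pair of arcs of $\mu$ of the form $(i+1,j+2),(i+2,j+1)$ (two nested arcs with consecutive starting points and consecutive ending points); the number of occurrences is the number of such pairs. *)

theory Defs
  imports Main
begin

definition is_matching :: "nat \<Rightarrow> (nat \<times> nat) set \<Rightarrow> bool" where
  "is_matching n \<mu> \<longleftrightarrow>
     (\<forall>(a,b)\<in>\<mu>. 1 \<le> a \<and> a < b \<and> b \<le> 2*n) \<and>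
     (\<forall>p\<in>{1..2*n}. \<exists>!e. e \<in> \<mu> \<and> (fst e = p \<or> snd e = p))"

definition matchings :: "nat \<Rightarrow> (nat \<times> nat) set set" where
  "matchings n = {\<mu>. is_matching n \<mu>}"

definition occ21 :: "(nat \<times> nat) set \<Rightarrow> nat" where
  "occ21 \<mu> = card {(i,j). (i+1, j+2) \<in> \<mu> \<and> (i+2, j+1) \<in> \<mu>}"

definition a_nk :: "nat \<Rightarrow> nat \<Rightarrow> nat" where
  "a_nk n k = card {\<mu> \<in> matchings n. occ21 \<mu> = k}"

end

theory Submission
  imports Defs
begin

definition sg :: "nat \<Rightarrow> nat \<Rightarrow> nat \<Rightarrow> nat" where
  "sg a b p = p + (if a < p then 1 else 0) + (if b < p then 1 else 0)"
definition tg :: "nat \<Rightarrow> nat \<Rightarrow> nat \<Rightarrow> nat" where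
  "tg a b q = q - (if a < q then 1 else 0) - (if Suc b < q then 1 else 0)"
definition phi :: "nat \<Rightarrow> nat \<Rightarrow> nat \<times> nat \<Rightarrow> nat \<times> nat" where
  "phi a b e = (if e = (a,b) then (a+1,b+1) else (sg a b (fst e), sg a b (snd e)))"
definition dbl :: "(nat \<times> nat) set \<Rightarrow> nat \<Rightarrow> nat \<Rightarrow> (nat \<times> nat) set" where
  "dbl \<nu> a b = insert (a, b+2) (phi a b ` \<nu>)"
definition col :: "(nat \<times> nat) set \<Rightarrow> nat \<Rightarrow> nat \<Rightarrow> (nat \<times> nat) set" where
  "col \<mu> a b = {(x,y). (x,y) = (a,b) \<or> (sg a b x, sg a b y) \<in> \<mu>}"
definition heads :: "(nat \<times> nat) set \<Rightarrow> (nat \<times> nat) set" where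
  "heads \<mu> = {(x,y). (x,y) \<in> \<mu> \<and> (x+1, y-1) \<in> \<mu>}"

lemma sg_inj: "a < b \<Longrightarrow> sg a b x = sg a b y \<longleftrightarrow> x = y"
  unfolding sg_def by auto
lemma sg_less: "a < b \<Longrightarrow> sg a b x < sg a b y \<longleftrightarrow> x < y"
  unfolding sg_def by auto
lemma sg_ne1: "a < b \<Longrightarrow> sg a b x \<noteq> Suc a"
  unfolding sg_def by auto
lemma sg_ne2: "a < b \<Longrightarrow> sg a b x \<noteq> Suc (Suc b)"
  unfolding sg_def by auto
lemma sg_eq_a: "a < b \<Longrightarrow> sg a b x = a \<longleftrightarrow> x = a"
  unfolding sg_def by auto
lemma sg_eq_b1: "a < b \<Longrightarrow> sg a b x = Suc b \<longleftrightarrow> x = b"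
  unfolding sg_def by auto
lemma sg_tg: "a < b \<Longrightarrow> q \<noteq> Suc a \<Longrightarrow> q \<noteq> Suc (Suc b) \<Longrightarrow> sg a b (tg a b q) = q"
  unfolding sg_def tg_def by auto
lemma tg_sg: "a < b \<Longrightarrow> tg a b (sg a b p) = p"
  unfolding sg_def tg_def by auto
lemma sg_0: "sg a b 0 = 0" unfolding sg_def by auto
lemma sg_ge: "p \<le> sg a b p" unfolding sg_def by auto
lemma sg_le: "sg a b p \<le> p + 2" unfolding sg_def by auto
lemma sg_big: "b < p \<Longrightarrow> a < b \<Longrightarrow> sg a b p = p + 2" unfolding sg_def by auto

lemma matchingD: "is_matching n \<mu> \<Longrightarrow> (x,y) \<in> \<mu> \<Longrightarrow> 1 \<le> x \<and> x < y \<and> y \<le> 2*n"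
  unfolding is_matching_def by fast

lemma match_ex1:
  assumes m: "is_matching n \<mu>" and p: "p \<in> {1..2*n}"
  shows "\<exists>!e. e \<in> \<mu> \<and> (fst e = p \<or> snd e = p)"
proof -
  have "\<forall>p\<in>{1..2*n}. \<exists>!e. e \<in> \<mu> \<and> (fst e = p \<or> snd e = p)"
    using m[unfolded is_matching_def] by (rule conjunct2)
  then show ?thesis using p by (rule bspec)
qed

lemma match_uniq:
  assumes m: "is_matching n \<mu>" and e1: "(x,y) \<in> \<mu>" and e2: "(u,v) \<in> \<mu>"
    and sh: "x = u \<or> x = v \<or> y = u \<or> y = v"
  shows "x = u \<and> y = v"
proof -
  have b1: "1 \<le> x \<and> x < y \<and> y \<le> 2*n" using matchingD[OF m e1] .
  from sh obtain p where p: "p = x \<or> p = y" "p = u \<or> p = v" by blast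
  have "p \<in> {1..2*n}" using b1 p by auto
  then have "\<exists>!e. e \<in> \<mu> \<and> (fst e = p \<or> snd e = p)" by (rule match_ex1[OF m])
  then obtain e where ee: "\<And>e'. e' \<in> \<mu> \<and> (fst e' = p \<or> snd e' = p) \<Longrightarrow> e' = e" by blast
  have "(x,y) = e" using ee[of "(x,y)"] e1 p(1) by auto
  moreover have "(u,v) = e" using ee[of "(u,v)"] e2 p(2) by auto
  ultimately have "(x,y) = (u,v)" by simp
  then show ?thesis by simp
qed

lemma match_cover:
  assumes "is_matching n \<mu>" "1 \<le> p" "p \<le> 2*n" shows "\<exists>x y. (x,y) \<in> \<mu> \<and> (x = p \<or> y = p)"
proof -
  have "p \<in> {1..2*n}" using assms by auto
  then have "\<exists>!e. e \<in> \<mu> \<and> (fst e = p \<or> snd e = p)" by (rule match_ex1[OF assms(1)])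
  then obtain e where "e \<in> \<mu> \<and> (fst e = p \<or> snd e = p)" by blast
  then show ?thesis by (cases e) auto
qed

lemma matchingI:
  assumes A: "\<And>x y. (x,y) \<in> \<mu> \<Longrightarrow> 1 \<le> x \<and> x < y \<and> y \<le> 2*n"
    and B: "\<And>p. 1 \<le> p \<Longrightarrow> p \<le> 2*n \<Longrightarrow> \<exists>x y. (x,y) \<in> \<mu> \<and> (x = p \<or> y = p)"
    and C: "\<And>x y u v. (x,y) \<in> \<mu> \<Longrightarrow> (u,v) \<in> \<mu> \<Longrightarrow> x = u \<or> x = v \<or> y = u \<or> y = v \<Longrightarrow> x = u \<and> y = v"
  shows "is_matching n \<mu>"
  unfolding is_matching_def
proof (intro conjI ballI)
  fix e assume "e \<in> \<mu>" then show "case e of (a,b) \<Rightarrow> 1 \<le> a \<and> a < b \<and> b \<le> 2*n"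
    using A by (cases e) simp
next
  fix p assume "p \<in> {1..2*n}"
  then obtain x y where xy: "(x,y) \<in> \<mu>" "x = p \<or> y = p" using B[of p] by auto
  show "\<exists>!e. e \<in> \<mu> \<and> (fst e = p \<or> snd e = p)"
  proof (rule ex1I[of _ "(x,y)"])
    show "(x,y) \<in> \<mu> \<and> (fst (x,y) = p \<or> snd (x,y) = p)" using xy by auto
  next
    fix e assume "e \<in> \<mu> \<and> (fst e = p \<or> snd e = p)"
    then obtain u v where e: "e = (u,v)" "(u,v) \<in> \<mu>" "u = p \<or> v = p" by (cases e) auto
    then show "e = (x,y)" using C[of u v x y] xy by blast
  qed
qed

lemma match_finite: "is_matching n \<mu> \<Longrightarrow> finite \<mu>"
proof -
  assume m: "is_matching n \<mu>"
  have "\<mu> \<subseteq> {1..2*n} \<times> {1..2*n}" using matchingD[OF m] by fastforce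
  then show ?thesis by (rule finite_subset) simp
qed

lemma finite_matchings: "finite (matchings n)"
proof -
  have "matchings n \<subseteq> Pow ({1..2*n} \<times> {1..2*n})"
    unfolding matchings_def using matchingD by fastforce
  then show ?thesis by (rule finite_subset) simp
qed

lemma match_card:
  assumes m: "is_matching n \<mu>" shows "card \<mu> = n"
proof -
  have fin: "finite \<mu>" using m by (rule match_finite)
  have U: "fst ` \<mu> \<union> snd ` \<mu> = {1..2*n}"
  proof
    show "fst ` \<mu> \<union> snd ` \<mu> \<subseteq> {1..2*n}" using matchingD[OF m] by fastforce
  next
    show "{1..2*n} \<subseteq> fst ` \<mu> \<union> snd ` \<mu>"
    proof
      fix p assume "p \<in> {1..2*n}"
      then obtain x y where "(x,y) \<in> \<mu>" "x = p \<or> y = p" using match_cover[OF m, of p] by auto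
      then show "p \<in> fst ` \<mu> \<union> snd ` \<mu>" by force
    qed
  qed
  have D: "fst ` \<mu> \<inter> snd ` \<mu> = {}"
  proof (rule ccontr)
    assume "fst ` \<mu> \<inter> snd ` \<mu> \<noteq> {}"
    then obtain x y u v where "(x,y) \<in> \<mu>" "(u,v) \<in> \<mu>" "x = v" by force
    then show False using match_uniq[OF m, of x y u v] matchingD[OF m, of u v] by auto
  qed
  have i1: "inj_on fst \<mu>"
    by (rule inj_onI) (metis match_uniq[OF m] prod.collapse)
  have i2: "inj_on snd \<mu>"
    by (rule inj_onI) (metis match_uniq[OF m] prod.collapse)
  have "2*n = card {1..2*n}" by simp
  also have "\<dots> = card (fst ` \<mu>) + card (snd ` \<mu>)"
    using U D fin by (metis card_Un_disjoint finite_imageI)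
  also have "\<dots> = 2 * card \<mu>" using card_image[OF i1] card_image[OF i2] by simp
  finally show ?thesis by simp
qed

lemma sg_simps:
  assumes "a < b"
  shows "sg a b x = sg a b y \<longleftrightarrow> x = y" "sg a b x \<noteq> Suc a" "Suc a \<noteq> sg a b x"
    "sg a b x \<noteq> Suc (Suc b)" "Suc (Suc b) \<noteq> sg a b x"
    "sg a b x = a \<longleftrightarrow> x = a" "a = sg a b x \<longleftrightarrow> x = a"
    "sg a b x = Suc b \<longleftrightarrow> x = b" "Suc b = sg a b x \<longleftrightarrow> x = b"
    "sg a b x < sg a b y \<longleftrightarrow> x < y"
  using assms unfolding sg_def by auto

lemma dbl_cases:
  assumes "(p,q) \<in> dbl \<nu> a b"
  obtains "(p,q) = (a, b+2)" | "(a,b) \<in> \<nu>" "(p,q) = (a+1,b+1)"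
    | x y where "(x,y) \<in> \<nu>" "(x,y) \<noteq> (a,b)" "p = sg a b x" "q = sg a b y"
proof -
  from assms have "(p,q) = (a,b+2) \<or> (\<exists>e\<in>\<nu>. (p,q) = phi a b e)" unfolding dbl_def by auto
  then show thesis
  proof
    assume "(p,q) = (a,b+2)" then show thesis by (rule that(1))
  next
    assume "\<exists>e\<in>\<nu>. (p,q) = phi a b e"
    then obtain x y where "(x,y) \<in> \<nu>" "(p,q) = phi a b (x,y)" by auto
    then show thesis using that(2,3) unfolding phi_def by (auto split: if_splits)
  qed
qed

lemma dbl_mem1: "(a, b+2) \<in> dbl \<nu> a b"
  unfolding dbl_def by (rule insertI1)

lemma dbl_mem2: "(a,b) \<in> \<nu> \<Longrightarrow> (a+1, b+1) \<in> dbl \<nu> a b"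
proof -
  assume "(a,b) \<in> \<nu>"
  then have "phi a b (a,b) \<in> phi a b ` \<nu>" by (rule imageI)
  then show ?thesis unfolding dbl_def phi_def by simp
qed

lemma dbl_mem3: "(x,y) \<in> \<nu> \<Longrightarrow> (x,y) \<noteq> (a,b) \<Longrightarrow> (sg a b x, sg a b y) \<in> dbl \<nu> a b"
proof -
  assume "(x,y) \<in> \<nu>" "(x,y) \<noteq> (a,b)"
  from this(1) have "phi a b (x,y) \<in> phi a b ` \<nu>" by (rule imageI)
  moreover have "phi a b (x,y) = (sg a b x, sg a b y)" using \<open>(x,y) \<noteq> (a,b)\<close> unfolding phi_def by auto
  ultimately have "(sg a b x, sg a b y) \<in> phi a b ` \<nu>" by simp
  then show ?thesis unfolding dbl_def by (rule insertI2)
qed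

lemma dbl_matching:
  assumes m: "is_matching n \<nu>" and ab: "(a,b) \<in> \<nu>"
  shows "is_matching (Suc n) (dbl \<nu> a b)"
proof -
  have abb: "1 \<le> a" "a < b" "b \<le> 2*n" using matchingD[OF m ab] by auto
  note ss = sg_simps[OF abb(2)]
  show ?thesis
  proof (rule matchingI)
    fix p q assume "(p,q) \<in> dbl \<nu> a b"
    then show "1 \<le> p \<and> p < q \<and> q \<le> 2 * Suc n"
    proof (cases rule: dbl_cases)
      case 1 then show ?thesis using abb by auto
    next
      case 2 then show ?thesis using abb by auto
    next
      case (3 x y)
      have "1 \<le> x \<and> x < y \<and> y \<le> 2*n" using matchingD[OF m 3(1)] .
      then show ?thesis using 3 ss(10) sg_ge[of x a b] sg_le[of a b y] by auto
    qed
  next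
    fix p assume p: "1 \<le> p" "p \<le> 2 * Suc n"
    show "\<exists>x y. (x, y) \<in> dbl \<nu> a b \<and> (x = p \<or> y = p)"
    proof (cases "p = Suc a \<or> p = Suc (Suc b)")
      case True
      have "(a, b+2) \<in> dbl \<nu> a b" "(a+1,b+1) \<in> dbl \<nu> a b"
        using dbl_mem1 dbl_mem2[OF ab] by auto
      then show ?thesis using True by auto
    next
      case False
      define r where "r = tg a b p"
      have sr: "sg a b r = p" unfolding r_def using False sg_tg[OF abb(2)] by auto
      have r1: "1 \<le> r"
      proof (rule ccontr)
        assume "\<not> 1 \<le> r" then have "r = 0" by simp
        then show False using sr p sg_0[of a b] by simp
      qed
      have r2: "r \<le> 2*n"
      proof (rule ccontr)
        assume "\<not> r \<le> 2*n"
        then have "sg a b r = r + 2" using abb by (intro sg_big) auto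
        then show False using sr p \<open>\<not> r \<le> 2*n\<close> by auto
      qed
      obtain x y where xy: "(x,y) \<in> \<nu>" "x = r \<or> y = r" using match_cover[OF m r1 r2] by auto
      show ?thesis
      proof (cases "(x,y) = (a,b)")
        case True
        have "(a, b+2) \<in> dbl \<nu> a b" "(a+1,b+1) \<in> dbl \<nu> a b"
          using dbl_mem1 dbl_mem2[OF ab] by auto
        moreover have "p = a \<or> p = b + 1" using True xy sr unfolding sg_def using abb by auto
        ultimately show ?thesis by auto
      next
        case False
        have "(sg a b x, sg a b y) \<in> dbl \<nu> a b" using xy(1) False by (rule dbl_mem3)
        then show ?thesis using xy sr by auto
      qed
    qed
  next
    fix x y u v assume e1: "(x,y) \<in> dbl \<nu> a b" and e2: "(u,v) \<in> dbl \<nu> a b"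
      and sh: "x = u \<or> x = v \<or> y = u \<or> y = v"
    have U: "\<And>x y u v. (x,y) \<in> \<nu> \<Longrightarrow> (u,v) \<in> \<nu> \<Longrightarrow> x = u \<or> x = v \<or> y = u \<or> y = v \<Longrightarrow> x = u \<and> y = v"
      using match_uniq[OF m] by blast
    have B: "\<And>x y. (x,y) \<in> \<nu> \<Longrightarrow> x < y" using matchingD[OF m] by blast
    have N: "x' \<noteq> a \<and> y' \<noteq> a \<and> x' \<noteq> b \<and> y' \<noteq> b" if "(x',y') \<in> \<nu>" "(x',y') \<noteq> (a,b)" for x' y'
    proof -
      have "\<not> (x' = a \<or> x' = b \<or> y' = a \<or> y' = b)"
      proof
        assume "x' = a \<or> x' = b \<or> y' = a \<or> y' = b"
        then have "x' = a \<and> y' = b" using U[OF that(1) ab] by blast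
        then show False using that(2) by simp
      qed
      then show ?thesis by simp
    qed
    from e1 show "x = u \<and> y = v"
    proof (cases rule: dbl_cases)
      case 1
      from e2 show ?thesis
      proof (cases rule: dbl_cases)
        case 1 then show ?thesis using \<open>(x,y) = (a,b+2)\<close> by auto
      next
        case 2 then show ?thesis using \<open>(x,y) = (a,b+2)\<close> sh abb by auto
      next
        case (3 x' y')
        have "x' \<noteq> a \<and> y' \<noteq> a" using N[OF 3(1,2)] by simp
        then show ?thesis using \<open>(x,y) = (a,b+2)\<close> sh 3(3,4) ss(2-9) by auto
      qed
    next
      case 2
      from e2 show ?thesis
      proof (cases rule: dbl_cases)
        case 1 then show ?thesis using \<open>(x,y) = (a+1,b+1)\<close> sh abb by auto
      next
        case 2 then show ?thesis using \<open>(x,y) = (a+1,b+1)\<close> by auto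
      next
        case (3 x' y')
        have "x' \<noteq> b \<and> y' \<noteq> b" using N[OF 3(1,2)] by simp
        then show ?thesis using \<open>(x,y) = (a+1,b+1)\<close> sh 3(3,4) ss(2-9) by auto
      qed
    next
      case (3 x1 y1)
      note h1 = 3
      from e2 show ?thesis
      proof (cases rule: dbl_cases)
        case 1
        have "x1 \<noteq> a \<and> y1 \<noteq> a" using N[OF h1(1,2)] by simp
        then show ?thesis using 1 sh h1(3,4) ss(2-9) by auto
      next
        case 2
        have "x1 \<noteq> b \<and> y1 \<noteq> b" using N[OF h1(1,2)] by simp
        then show ?thesis using 2 sh h1(3,4) ss(2-9) by auto
      next
        case (3 x' y')
        have "x1 = x' \<or> x1 = y' \<or> y1 = x' \<or> y1 = y'" using sh h1(3,4) 3(3,4) ss(1) by auto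
        then have "x1 = x' \<and> y1 = y'" using U[OF h1(1) 3(1)] by blast
        then show ?thesis using h1(3,4) 3(3,4) by simp
      qed
    qed
  qed
qed

lemma col_mem: "(x,y) \<in> col \<mu> a b \<longleftrightarrow> (x,y) = (a,b) \<or> (sg a b x, sg a b y) \<in> \<mu>"
  unfolding col_def by simp

lemma col_other:
  assumes m: "is_matching N \<mu>" and s1: "(a,b+2) \<in> \<mu>" and s2: "(a+1,b+1) \<in> \<mu>"
    and e: "(u,v) \<in> \<mu>" and n1: "(u,v) \<noteq> (a,b+2)" and n2: "(u,v) \<noteq> (a+1,b+1)"
  shows "u \<noteq> a \<and> u \<noteq> a+1 \<and> u \<noteq> b+1 \<and> u \<noteq> b+2 \<and> v \<noteq> a \<and> v \<noteq> a+1 \<and> v \<noteq> b+1 \<and> v \<noteq> b+2"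
proof -
  have "\<not> (u = a \<or> v = a \<or> u = b+2 \<or> v = b+2)"
  proof
    assume "u = a \<or> v = a \<or> u = b+2 \<or> v = b+2"
    then have "u = a \<and> v = b+2" using match_uniq[OF m e s1] by blast
    then show False using n1 by simp
  qed
  moreover have "\<not> (u = a+1 \<or> v = a+1 \<or> u = b+1 \<or> v = b+1)"
  proof
    assume "u = a+1 \<or> v = a+1 \<or> u = b+1 \<or> v = b+1"
    then have "u = a+1 \<and> v = b+1" using match_uniq[OF m e s2] by blast
    then show False using n2 by simp
  qed
  ultimately show ?thesis by simp
qed

lemma col_K:
  assumes m: "is_matching N \<mu>" and s1: "(a,b+2) \<in> \<mu>" and s2: "(a+1,b+1) \<in> \<mu>"
    and e: "(sg a b x, sg a b y) \<in> \<mu>"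
  shows "x \<noteq> a \<and> x \<noteq> b \<and> y \<noteq> a \<and> y \<noteq> b"
proof -
  have ab: "a < b" using matchingD[OF m s2] by simp
  note ss = sg_simps[OF ab]
  have "(sg a b x, sg a b y) \<noteq> (a,b+2)" "(sg a b x, sg a b y) \<noteq> (a+1,b+1)" using ss(2,4) by auto
  from col_other[OF m s1 s2 e this] show ?thesis using ss(6,8) by auto
qed

lemma col_matching:
  assumes m: "is_matching (Suc n) \<mu>" and s1: "(a,b+2) \<in> \<mu>" and s2: "(a+1,b+1) \<in> \<mu>"
  shows "is_matching n (col \<mu> a b)"
proof -
  have abb: "1 \<le> a" "a < b" "b \<le> 2*n" using matchingD[OF m s1] matchingD[OF m s2] by auto
  note ss = sg_simps[OF abb(2)]
  have U: "\<And>x y u v. (x,y) \<in> \<mu> \<Longrightarrow> (u,v) \<in> \<mu> \<Longrightarrow> x = u \<or> x = v \<or> y = u \<or> y = v \<Longrightarrow> x = u \<and> y = v"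
    using match_uniq[OF m] by blast
  show ?thesis
  proof (rule matchingI)
    fix x y assume "(x,y) \<in> col \<mu> a b"
    then have "(x,y) = (a,b) \<or> (sg a b x, sg a b y) \<in> \<mu>" by (simp add: col_mem)
    then show "1 \<le> x \<and> x < y \<and> y \<le> 2 * n"
    proof
      assume "(x,y) = (a,b)" then show ?thesis using abb by auto
    next
      assume e: "(sg a b x, sg a b y) \<in> \<mu>"
      have bd: "1 \<le> sg a b x \<and> sg a b x < sg a b y \<and> sg a b y \<le> 2 * Suc n" using matchingD[OF m e] .
      have "x \<noteq> 0" using bd sg_0[of a b] by (metis not_one_le_zero)
      moreover have "x < y" using bd ss(10) by auto
      moreover have "y \<le> 2*n"
      proof (cases "b < y")
        case True then show ?thesis using sg_big[OF True abb(2)] bd by auto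
      next
        case False then show ?thesis using abb by auto
      qed
      ultimately show ?thesis by auto
    qed
  next
    fix p assume p: "1 \<le> p" "p \<le> 2*n"
    define q where "q = sg a b p"
    have q: "1 \<le> q" "q \<le> 2 * Suc n" using p sg_ge[of p a b] sg_le[of a b p] unfolding q_def by auto
    obtain u v where uv: "(u,v) \<in> \<mu>" "u = q \<or> v = q" using match_cover[OF m q] by auto
    show "\<exists>x y. (x, y) \<in> col \<mu> a b \<and> (x = p \<or> y = p)"
    proof (cases "(u,v) = (a,b+2) \<or> (u,v) = (a+1,b+1)")
      case True
      then have h: "q = a \<or> q = Suc (Suc b) \<or> q = Suc a \<or> q = Suc b"
        using uv(2) by auto
      have "q \<noteq> Suc a" "q \<noteq> Suc (Suc b)" unfolding q_def using ss(2,4) by simp_all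
      then have "q = a \<or> q = Suc b" using h by simp
      then have "p = a \<or> p = b" using ss(6)[of p] ss(8)[of p] unfolding q_def by simp
      moreover have "(a,b) \<in> col \<mu> a b" by (simp add: col_mem)
      ultimately show ?thesis by (intro exI[of _ a] exI[of _ b]) auto
    next
      case False
      then have o: "u \<noteq> Suc a \<and> u \<noteq> Suc (Suc b) \<and> v \<noteq> Suc a \<and> v \<noteq> Suc (Suc b)"
      proof -
        have n: "(u,v) \<noteq> (a,b+2)" "(u,v) \<noteq> (a+1,b+1)" using False by auto
        show ?thesis using col_other[OF m s1 s2 uv(1) n] by simp
      qed
      have "sg a b (tg a b u) = u" "sg a b (tg a b v) = v" using o sg_tg[OF abb(2)] by auto
      then have "(tg a b u, tg a b v) \<in> col \<mu> a b" using uv(1) by (simp add: col_mem)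
      moreover have "tg a b u = p \<or> tg a b v = p" using uv(2) tg_sg[OF abb(2)] unfolding q_def by auto
      ultimately show ?thesis by blast
    qed
  next
    fix x y u v assume e1: "(x,y) \<in> col \<mu> a b" and e2: "(u,v) \<in> col \<mu> a b"
      and sh: "x = u \<or> x = v \<or> y = u \<or> y = v"
    from e1 have c1: "(x,y) = (a,b) \<or> (sg a b x, sg a b y) \<in> \<mu>" by (simp add: col_mem)
    from e2 have c2: "(u,v) = (a,b) \<or> (sg a b u, sg a b v) \<in> \<mu>" by (simp add: col_mem)
    show "x = u \<and> y = v"
    proof (cases "(x,y) = (a,b)")
      case True
      show ?thesis
      proof (cases "(u,v) = (a,b)")
        case True then show ?thesis using \<open>(x,y) = (a,b)\<close> by simp
      next
        case False
        then have "(sg a b u, sg a b v) \<in> \<mu>" using c2 by blast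
        from col_K[OF m s1 s2 this] show ?thesis using True sh by auto
      qed
    next
      case False
      then have f1: "(sg a b x, sg a b y) \<in> \<mu>" using c1 by blast
      show ?thesis
      proof (cases "(u,v) = (a,b)")
        case True
        from col_K[OF m s1 s2 f1] show ?thesis using True sh by auto
      next
        case False
        then have f2: "(sg a b u, sg a b v) \<in> \<mu>" using c2 by blast
        have "sg a b x = sg a b u \<or> sg a b x = sg a b v \<or> sg a b y = sg a b u \<or> sg a b y = sg a b v"
          using sh by auto
        from U[OF f1 f2 this] show ?thesis using ss(1) by simp
      qed
    qed
  qed
qed

lemma col_dbl:
  assumes ab: "a < b" and e: "(a,b) \<in> \<nu>"
  shows "col (dbl \<nu> a b) a b = \<nu>"
proof (intro set_eqI iffI)
  note ss = sg_simps[OF ab]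
  fix z assume "z \<in> col (dbl \<nu> a b) a b"
  then obtain x y where z: "z = (x,y)" "(x,y) = (a,b) \<or> (sg a b x, sg a b y) \<in> dbl \<nu> a b"
    by (cases z) (simp add: col_mem)
  from z(2) show "z \<in> \<nu>"
  proof
    assume "(x,y) = (a,b)" then show ?thesis using z e by simp
  next
    assume "(sg a b x, sg a b y) \<in> dbl \<nu> a b"
    then show ?thesis
    proof (cases rule: dbl_cases)
      case 1 then show ?thesis using ss(4) by auto
    next
      case 2 then show ?thesis using ss(2) by auto
    next
      case (3 x' y') then show ?thesis using ss(1) z by auto
    qed
  qed
next
  fix z assume "z \<in> \<nu>"
  then obtain x y where z: "z = (x,y)" "(x,y) \<in> \<nu>" by (cases z) auto
  show "z \<in> col (dbl \<nu> a b) a b"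
  proof (cases "(x,y) = (a,b)")
    case True then show ?thesis using z by (simp add: col_mem)
  next
    case False
    then have "(sg a b x, sg a b y) \<in> dbl \<nu> a b" using z(2) by (intro dbl_mem3)
    then show ?thesis using z by (simp add: col_mem)
  qed
qed

lemma dbl_col:
  assumes m: "is_matching (Suc n) \<mu>" and s1: "(a,b+2) \<in> \<mu>" and s2: "(a+1,b+1) \<in> \<mu>"
  shows "dbl (col \<mu> a b) a b = \<mu>"
proof -
  have ab: "a < b" using matchingD[OF m s2] by simp
  note ss = sg_simps[OF ab]
  show ?thesis
  proof (intro set_eqI iffI)
    fix z assume "z \<in> dbl (col \<mu> a b) a b"
    then obtain p q where z: "z = (p,q)" "(p,q) \<in> dbl (col \<mu> a b) a b" by (cases z) simp
    from z(2) show "z \<in> \<mu>"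
    proof (cases rule: dbl_cases)
      case 1 then show ?thesis using z s1 by simp
    next
      case 2 then show ?thesis using z s2 by simp
    next
      case (3 x y)
      from 3(1) have "(x,y) = (a,b) \<or> (sg a b x, sg a b y) \<in> \<mu>" by (simp only: col_mem)
      then have "(sg a b x, sg a b y) \<in> \<mu>" using 3(2) by blast
      then show ?thesis using z 3(3,4) by simp
    qed
  next
    fix z assume "z \<in> \<mu>"
    then obtain p q where z: "z = (p,q)" "(p,q) \<in> \<mu>" by (cases z) simp
    show "z \<in> dbl (col \<mu> a b) a b"
    proof (cases "(p,q) = (a,b+2) \<or> (p,q) = (a+1,b+1)")
      case True
      have "(a,b) \<in> col \<mu> a b" by (simp add: col_mem)
      then have "(a+1,b+1) \<in> dbl (col \<mu> a b) a b" by (rule dbl_mem2)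
      moreover have "(a,b+2) \<in> dbl (col \<mu> a b) a b" by (rule dbl_mem1)
      ultimately show ?thesis using True z(1) by blast
    next
      case False
      then have o: "p \<noteq> a \<and> p \<noteq> Suc a \<and> p \<noteq> Suc (Suc b) \<and> q \<noteq> Suc a \<and> q \<noteq> Suc (Suc b)"
      proof -
        have n: "(p,q) \<noteq> (a,b+2)" "(p,q) \<noteq> (a+1,b+1)" using False by auto
        show ?thesis using col_other[OF m s1 s2 z(2) n] by simp
      qed
      have eq: "sg a b (tg a b p) = p" "sg a b (tg a b q) = q" using o sg_tg[OF ab] by auto
      then have "(tg a b p, tg a b q) \<in> col \<mu> a b" using z(2) by (simp add: col_mem)
      moreover have "(tg a b p, tg a b q) \<noteq> (a,b)"
      proof
        assume "(tg a b p, tg a b q) = (a,b)"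
        then have "tg a b p = a" by simp
        then have "p = sg a b a" using eq(1) by simp
        moreover have "sg a b a = a" using ss(6) by simp
        ultimately show False using o by simp
      qed
      ultimately have "(sg a b (tg a b p), sg a b (tg a b q)) \<in> dbl (col \<mu> a b) a b" by (rule dbl_mem3)
      then show ?thesis using eq z(1) by simp
    qed
  qed
qed

lemma sg_suc: "a < b \<Longrightarrow> x \<noteq> a \<Longrightarrow> x \<noteq> b \<Longrightarrow> sg a b (Suc x) = Suc (sg a b x)"
  unfolding sg_def by auto

lemma sg_eq_a2: "a < b \<Longrightarrow> sg a b x = Suc (Suc a) \<Longrightarrow> x = Suc a"
  unfolding sg_def by (auto split: if_splits)

lemma sg_eq_b: "a < b \<Longrightarrow> sg a b y = b \<Longrightarrow> y = b - 1 \<and> a < y"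
  unfolding sg_def by (auto split: if_splits)

lemma sg_lt_a: "a < b \<Longrightarrow> Suc (sg a b x) = a \<longleftrightarrow> Suc x = a"
  unfolding sg_def by auto

lemma heads_mem: "(x,y) \<in> heads \<mu> \<longleftrightarrow> (x,y) \<in> \<mu> \<and> (x+1,y-1) \<in> \<mu>"
  unfolding heads_def by simp

lemma key1:
  assumes m: "is_matching n \<nu>" and ab: "(a,b) \<in> \<nu>"
  shows "(a+1,b-1) \<in> \<nu> \<longleftrightarrow> (a+2, b) \<in> dbl \<nu> a b"
proof
  have abb: "a < b" using matchingD[OF m ab] by simp
  note ss = sg_simps[OF abb]
  {
    assume h: "(a+1,b-1) \<in> \<nu>"
    have lt: "a+1 < b-1" using matchingD[OF m h] by simp
    have "(sg a b (a+1), sg a b (b-1)) \<in> dbl \<nu> a b" using h by (rule dbl_mem3) simp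
    moreover have "sg a b (a+1) = a+2" "sg a b (b-1) = b" using lt abb unfolding sg_def by auto
    ultimately show "(a+2, b) \<in> dbl \<nu> a b" by simp
  }
  {
    assume "(a+2, b) \<in> dbl \<nu> a b"
    then show "(a+1,b-1) \<in> \<nu>"
    proof (cases rule: dbl_cases)
      case 1 then show ?thesis by simp
    next
      case 2 then show ?thesis by simp
    next
      case (3 x' y')
      have "x' = Suc a" using sg_eq_a2[OF abb] 3(3) by simp
      moreover have "y' = b - 1" using sg_eq_b[OF abb] 3(4) by simp
      ultimately show ?thesis using 3(1) by simp
    qed
  }
qed

lemma key2:
  assumes m: "is_matching n \<nu>" and ab: "(a,b) \<in> \<nu>" and e: "(x,y) \<in> \<nu>" and ne: "(x,y) \<noteq> (a,b)"
  shows "(x+1,y-1) \<in> \<nu> \<longleftrightarrow> (sg a b x + 1, sg a b y - 1) \<in> dbl \<nu> a b"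
proof -
  have abb: "a < b" using matchingD[OF m ab] by simp
  note ss = sg_simps[OF abb]
  have xy: "1 \<le> x" "x < y" using matchingD[OF m e] by auto
  have U: "\<And>x y u v. (x,y) \<in> \<nu> \<Longrightarrow> (u,v) \<in> \<nu> \<Longrightarrow> x = u \<or> x = v \<or> y = u \<or> y = v \<Longrightarrow> x = u \<and> y = v"
    using match_uniq[OF m] by blast
  have N: "\<not> (x = a \<or> x = b \<or> y = a \<or> y = b)"
  proof
    assume "x = a \<or> x = b \<or> y = a \<or> y = b"
    then have "x = a \<and> y = b" using U[OF e ab] by blast
    then show False using ne by simp
  qed
  have sx: "sg a b (Suc x) = Suc (sg a b x)" using N sg_suc[OF abb] by auto
  show ?thesis
  proof (cases "y = Suc b")
    case True
    have sy: "sg a b y - 1 = Suc (Suc b)" using True sg_big[of b y a] abb by simp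
    have L: "(x+1,y-1) \<in> \<nu> \<longleftrightarrow> Suc x = a"
    proof
      assume "(x+1,y-1) \<in> \<nu>"
      then have "(Suc x, b) \<in> \<nu>" using True by simp
      then show "Suc x = a" using U[OF _ ab, of "Suc x" b] by blast
    next
      assume "Suc x = a" then show "(x+1,y-1) \<in> \<nu>" using True ab by simp
    qed
    have R: "(sg a b x + 1, sg a b y - 1) \<in> dbl \<nu> a b \<longleftrightarrow> Suc (sg a b x) = a"
    proof
      assume "(sg a b x + 1, sg a b y - 1) \<in> dbl \<nu> a b"
      then have "(Suc (sg a b x), Suc (Suc b)) \<in> dbl \<nu> a b" using sy by simp
      then show "Suc (sg a b x) = a"
      proof (cases rule: dbl_cases)
        case 1 then show ?thesis by simp
      next
        case 2 then show ?thesis by simp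
      next
        case (3 x' y') then show ?thesis using ss(4) by metis
      qed
    next
      assume "Suc (sg a b x) = a"
      then show "(sg a b x + 1, sg a b y - 1) \<in> dbl \<nu> a b" using sy dbl_mem1[of a b \<nu>] by simp
    qed
    show ?thesis using L R sg_lt_a[OF abb] by simp
  next
    case False
    show ?thesis
    proof (cases "y = Suc a")
      case True
      have L: "(x+1,y-1) \<notin> \<nu>"
      proof
        assume "(x+1,y-1) \<in> \<nu>"
        then have "(Suc x, a) \<in> \<nu>" using True by simp
        then show False using U[OF _ ab, of "Suc x" a] abb by auto
      qed
      have sy: "sg a b y - 1 = Suc a" using True abb unfolding sg_def by auto
      have R: "(sg a b x + 1, sg a b y - 1) \<notin> dbl \<nu> a b"
      proof
        assume "(sg a b x + 1, sg a b y - 1) \<in> dbl \<nu> a b"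
        then have "(Suc (sg a b x), Suc a) \<in> dbl \<nu> a b" using sy by simp
        then show False
        proof (cases rule: dbl_cases)
          case 1 then show ?thesis using abb by simp
        next
          case 2 then show ?thesis using abb by simp
        next
          case (3 x' y') then show ?thesis using ss(2) by metis
        qed
      qed
      show ?thesis using L R by simp
    next
      case False
      have y1: "y = Suc (y - 1)" using xy by simp
      have "y - 1 \<noteq> a" "y - 1 \<noteq> b" using \<open>y \<noteq> Suc a\<close> \<open>y \<noteq> Suc b\<close> xy by auto
      then have "sg a b y = Suc (sg a b (y - 1))" using sg_suc[OF abb, of "y-1"] y1 by metis
      then have sy: "sg a b y - 1 = sg a b (y - 1)" by simp
      have nab: "(Suc x, y - 1) \<noteq> (a,b)" using \<open>y - 1 \<noteq> b\<close> by simp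
      have "(sg a b x + 1, sg a b y - 1) \<in> dbl \<nu> a b \<longleftrightarrow> (sg a b (Suc x), sg a b (y-1)) \<in> dbl \<nu> a b"
        using sx sy by simp
      also have "\<dots> \<longleftrightarrow> (Suc x, y - 1) \<in> \<nu>"
      proof
        assume "(sg a b (Suc x), sg a b (y-1)) \<in> dbl \<nu> a b"
        then show "(Suc x, y - 1) \<in> \<nu>"
        proof (cases rule: dbl_cases)
          case 1 then show ?thesis using ss(4) by auto
        next
          case 2 then show ?thesis using ss(2) by auto
        next
          case (3 x' y') then show ?thesis using ss(1) by auto
        qed
      next
        assume "(Suc x, y - 1) \<in> \<nu>"
        then show "(sg a b (Suc x), sg a b (y-1)) \<in> dbl \<nu> a b" using nab by (rule dbl_mem3)
      qed
      finally show ?thesis by simp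
    qed
  qed
qed

lemma phi_inj: "a < b \<Longrightarrow> inj_on (phi a b) \<nu>"
proof (rule inj_onI)
  fix e1 e2 assume ab: "a < b" and "e1 \<in> \<nu>" "e2 \<in> \<nu>" and eq: "phi a b e1 = phi a b e2"
  note ss = sg_simps[OF ab]
  obtain x1 y1 x2 y2 where e: "e1 = (x1,y1)" "e2 = (x2,y2)" by (cases e1, cases e2) auto
  show "e1 = e2"
  proof (cases "e1 = (a,b)"; cases "e2 = (a,b)")
    assume "e1 = (a,b)" "e2 = (a,b)" then show ?thesis by simp
  next
    assume "e1 = (a,b)" "e2 \<noteq> (a,b)" then show ?thesis using eq e ss(3) unfolding phi_def by auto
  next
    assume "e1 \<noteq> (a,b)" "e2 = (a,b)" then show ?thesis using eq e ss(2) unfolding phi_def by auto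
  next
    assume "e1 \<noteq> (a,b)" "e2 \<noteq> (a,b)" then show ?thesis using eq e ss(1) unfolding phi_def by auto
  qed
qed

lemma notin_phi: "a < b \<Longrightarrow> (a,b+2) \<notin> phi a b ` \<nu>"
proof
  assume ab: "a < b" and "(a,b+2) \<in> phi a b ` \<nu>"
  then obtain e where "(a,b+2) = phi a b e" by blast
  then show False using sg_simps(4)[OF ab] unfolding phi_def by (auto split: if_splits)
qed

lemma heads_dbl:
  assumes m: "is_matching n \<nu>" and ab: "(a,b) \<in> \<nu>"
  shows "heads (dbl \<nu> a b) = insert (a,b+2) (phi a b ` heads \<nu>)"
proof (intro set_eqI iffI)
  have abb: "a < b" using matchingD[OF m ab] by simp
  have K: "(fst e + 1, snd e - 1) \<in> \<nu> \<longleftrightarrow> (fst (phi a b e) + 1, snd (phi a b e) - 1) \<in> dbl \<nu> a b"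
    if "e \<in> \<nu>" for e
  proof (cases "e = (a,b)")
    case True then show ?thesis using key1[OF m ab] unfolding phi_def by simp
  next
    case False
    obtain x y where e: "e = (x,y)" by (cases e) auto
    have pe: "phi a b e = (sg a b x, sg a b y)" using False e unfolding phi_def by auto
    show ?thesis using key2[OF m ab, of x y] that False e pe by simp
  qed
  {
    fix z assume z: "z \<in> heads (dbl \<nu> a b)"
    obtain p q where pq: "z = (p,q)" by (cases z) auto
    have h: "(p,q) \<in> dbl \<nu> a b" "(p+1,q-1) \<in> dbl \<nu> a b" using z pq by (simp_all add: heads_mem)
    show "z \<in> insert (a,b+2) (phi a b ` heads \<nu>)"
    proof (cases "(p,q) = (a,b+2)")
      case True then show ?thesis using pq by simp
    next
      case False
      then have "(p,q) \<in> phi a b ` \<nu>" using h(1) unfolding dbl_def by blast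
      then obtain e where e: "e \<in> \<nu>" "(p,q) = phi a b e" by blast
      have "(fst e + 1, snd e - 1) \<in> \<nu>" using K[OF e(1)] h(2) e(2)
        by (metis fst_conv snd_conv)
      then have "e \<in> heads \<nu>" using e(1) by (cases e) (simp add: heads_mem)
      then show ?thesis using e(2) pq by simp
    qed
  next
    fix z assume z: "z \<in> insert (a,b+2) (phi a b ` heads \<nu>)"
    show "z \<in> heads (dbl \<nu> a b)"
    proof (cases "z = (a,b+2)")
      case True
      have "(a,b+2) \<in> dbl \<nu> a b" "(a+1,b+1) \<in> dbl \<nu> a b" using dbl_mem1 dbl_mem2[OF ab] by auto
      then show ?thesis using True by (simp add: heads_mem)
    next
      case False
      then obtain e where e: "e \<in> heads \<nu>" "z = phi a b e" using z by blast
      obtain x y where xy: "e = (x,y)" by (cases e) auto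
      have e1: "e \<in> \<nu>" "(x+1,y-1) \<in> \<nu>" using e(1) xy by (simp_all add: heads_mem)
      have "phi a b e \<in> dbl \<nu> a b" using e1(1) unfolding dbl_def by simp
      moreover have "(fst (phi a b e) + 1, snd (phi a b e) - 1) \<in> dbl \<nu> a b"
        using K[OF e1(1)] e1(2) xy by simp
      ultimately show ?thesis using e(2) unfolding heads_def by (cases "phi a b e") auto
    qed
  }
qed

lemma occ_heads:
  assumes m: "is_matching n \<mu>" shows "occ21 \<mu> = card (heads \<mu>)"
proof -
  let ?O = "{(i,j). (i+1, j+2) \<in> \<mu> \<and> (i+2, j+1) \<in> \<mu>}"
  let ?f = "\<lambda>(i,j). (i+1, j+2)"
  have inj: "inj_on ?f ?O" by (rule inj_onI) auto
  have img: "?f ` ?O = heads \<mu>"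
  proof (intro set_eqI iffI)
    fix z assume "z \<in> ?f ` ?O"
    then obtain i j where "z = (i+1,j+2)" "(i+1, j+2) \<in> \<mu>" "(i+2, j+1) \<in> \<mu>" by auto
    then show "z \<in> heads \<mu>" by (simp add: heads_mem)
  next
    fix z assume z: "z \<in> heads \<mu>"
    obtain x y where xy: "z = (x,y)" by (cases z) auto
    have h: "(x,y) \<in> \<mu>" "(x+1,y-1) \<in> \<mu>" using z xy by (simp_all add: heads_mem)
    have b: "1 \<le> x" "x < y" using matchingD[OF m h(1)] by auto
    have "(x-1, y-2) \<in> ?O" using h b by (simp add: Suc_diff_Suc numeral_2_eq_2)
    moreover have "z = ?f (x-1, y-2)" using xy b by auto
    ultimately show "z \<in> ?f ` ?O" by blast
  qed
  have "occ21 \<mu> = card ?O" unfolding occ21_def by simp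
  also have "\<dots> = card (?f ` ?O)" using card_image[OF inj] by simp
  also have "\<dots> = card (heads \<mu>)" using img by simp
  finally show ?thesis .
qed

lemma occ_dbl:
  assumes m: "is_matching n \<nu>" and ab: "(a,b) \<in> \<nu>"
  shows "occ21 (dbl \<nu> a b) = Suc (occ21 \<nu>)"
proof -
  have abb: "a < b" using matchingD[OF m ab] by simp
  have fin: "finite (heads \<nu>)"
    using match_finite[OF m] by (rule finite_subset[rotated]) (auto simp: heads_def)
  have "occ21 (dbl \<nu> a b) = card (heads (dbl \<nu> a b))" using occ_heads[OF dbl_matching[OF m ab]] .
  also have "\<dots> = card (insert (a,b+2) (phi a b ` heads \<nu>))" using heads_dbl[OF m ab] by simp
  also have "\<dots> = Suc (card (phi a b ` heads \<nu>))"
  proof -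
    have "(a,b+2) \<notin> phi a b ` heads \<nu>" using notin_phi[OF abb, of "heads \<nu>"] .
    then show ?thesis using fin by simp
  qed
  also have "card (phi a b ` heads \<nu>) = card (heads \<nu>)"
    by (rule card_image) (rule phi_inj[OF abb])
  also have "\<dots> = occ21 \<nu>" using occ_heads[OF m] by simp
  finally show ?thesis .
qed

lemma rec_step:
  assumes k: "1 \<le> k" and n: "1 \<le> n"
  shows "k * a_nk n k = (n - 1) * a_nk (n - 1) (k - 1)"
proof -
  define A where "A = {\<mu> \<in> matchings n. occ21 \<mu> = k}"
  define B where "B = {\<nu> \<in> matchings (n-1). occ21 \<nu> = k - 1}"
  define Oc where "Oc = (\<lambda>\<mu>::(nat\<times>nat) set. {(i,j). (i+1, j+2) \<in> \<mu> \<and> (i+2, j+1) \<in> \<mu>})"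
  define L where "L = Sigma A Oc"
  define R where "R = Sigma B (\<lambda>\<nu>. \<nu>)"
  define f where "f = (\<lambda>(\<nu>::(nat\<times>nat) set, (a::nat,b::nat)). (dbl \<nu> a b, (a - 1, b)))"
  define g where "g = (\<lambda>(\<mu>::(nat\<times>nat) set, (i::nat,j::nat)). (col \<mu> (i+1) j, (i+1, j)))"
  have nS: "n = Suc (n - 1)" using n by simp
  have kS: "k = Suc (k - 1)" using k by simp
  have bij: "bij_betw f R L"
  proof (rule bij_betw_byWitness[where f' = g])
    show "\<forall>x\<in>R. g (f x) = x"
    proof
      fix x assume "x \<in> R"
      then obtain \<nu> a b where x: "x = (\<nu>,(a,b))" "\<nu> \<in> B" "(a,b) \<in> \<nu>" unfolding R_def by auto
      have m: "is_matching (n-1) \<nu>" using x(2) unfolding B_def matchings_def by simp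
      have abb: "1 \<le> a" "a < b" using matchingD[OF m x(3)] by auto
      have "a - 1 + 1 = a" using abb by simp
      then show "g (f x) = x" using x col_dbl[OF abb(2) x(3)] unfolding f_def g_def by simp
    qed
  next
    show "\<forall>y\<in>L. f (g y) = y"
    proof
      fix y assume "y \<in> L"
      then obtain \<mu> i j where y: "y = (\<mu>,(i,j))" "\<mu> \<in> A" "(i+1, j+2) \<in> \<mu>" "(i+2, j+1) \<in> \<mu>"
        unfolding L_def Oc_def by auto
      have m: "is_matching (Suc (n-1)) \<mu>" using y(2) nS unfolding A_def matchings_def by simp
      have s1: "(i+1, j+2) \<in> \<mu>" and s2: "(i+1+1, j+1) \<in> \<mu>" using y by (simp_all add: numeral_2_eq_2)
      show "f (g y) = y" using y dbl_col[OF m s1 s2] unfolding f_def g_def by simp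
    qed
  next
    show "f ` R \<subseteq> L"
    proof
      fix z assume "z \<in> f ` R"
      then obtain \<nu> a b where x: "z = f (\<nu>,(a,b))" "\<nu> \<in> B" "(a,b) \<in> \<nu>" unfolding R_def by auto
      have m: "is_matching (n-1) \<nu>" and oc: "occ21 \<nu> = k - 1" using x(2) unfolding B_def matchings_def by simp_all
      have abb: "1 \<le> a" "a < b" using matchingD[OF m x(3)] by auto
      have "is_matching n (dbl \<nu> a b)" using dbl_matching[OF m x(3)] nS by simp
      moreover have "occ21 (dbl \<nu> a b) = k" using occ_dbl[OF m x(3)] oc kS by simp
      moreover have "(a - 1 + 1, b + 2) \<in> dbl \<nu> a b" using abb dbl_mem1[of a b \<nu>] by simp
      moreover have "(a - 1 + 2, b + 1) \<in> dbl \<nu> a b" using abb dbl_mem2[OF x(3)] by simp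
      ultimately show "z \<in> L" using x(1) unfolding L_def A_def Oc_def f_def matchings_def by simp
    qed
  next
    show "g ` L \<subseteq> R"
    proof
      fix z assume "z \<in> g ` L"
      then obtain \<mu> i j where y: "z = g (\<mu>,(i,j))" "\<mu> \<in> A" "(i+1, j+2) \<in> \<mu>" "(i+2, j+1) \<in> \<mu>"
        unfolding L_def Oc_def by auto
      have m: "is_matching (Suc (n-1)) \<mu>" using y(2) nS unfolding A_def matchings_def by simp
      have oc: "occ21 \<mu> = k" using y(2) unfolding A_def by simp
      have s1: "(i+1, j+2) \<in> \<mu>" and s2: "(i+1+1, j+1) \<in> \<mu>" using y by (simp_all add: numeral_2_eq_2)
      have mc: "is_matching (n-1) (col \<mu> (i+1) j)" using col_matching[OF m s1 s2] .
      have ab: "(i+1, j) \<in> col \<mu> (i+1) j" by (simp add: col_mem)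
      have "occ21 \<mu> = Suc (occ21 (col \<mu> (i+1) j))"
        using occ_dbl[OF mc ab] dbl_col[OF m s1 s2] by simp
      then have "occ21 (col \<mu> (i+1) j) = k - 1" using oc by simp
      then show "z \<in> R" using y(1) mc ab unfolding R_def B_def g_def matchings_def by simp
    qed
  qed
  have "card R = card L" using bij by (rule bij_betw_same_card)
  moreover have "card L = k * a_nk n k"
  proof -
    have finA: "finite A" unfolding A_def using finite_matchings[of n] by simp
    have cO: "\<And>\<mu>. \<mu> \<in> A \<Longrightarrow> card (Oc \<mu>) = k" unfolding A_def Oc_def occ21_def by simp
    have fO: "\<forall>\<mu>\<in>A. finite (Oc \<mu>)"
    proof
      fix \<mu> assume "\<mu> \<in> A" then have "card (Oc \<mu>) = k" by (rule cO)
      then show "finite (Oc \<mu>)" using k by (intro card_ge_0_finite) simp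
    qed
    have "card L = (\<Sum>\<mu>\<in>A. card (Oc \<mu>))" unfolding L_def using finA fO by (rule card_SigmaI)
    also have "\<dots> = (\<Sum>\<mu>\<in>A. k)" using cO by simp
    also have "\<dots> = k * card A" by simp
    finally show ?thesis unfolding a_nk_def A_def by simp
  qed
  moreover have "card R = (n - 1) * a_nk (n-1) (k-1)"
  proof -
    have finB: "finite B" unfolding B_def using finite_matchings[of "n-1"] by simp
    have cB: "\<And>\<nu>. \<nu> \<in> B \<Longrightarrow> card \<nu> = n - 1" unfolding B_def matchings_def using match_card by simp
    have fB: "\<forall>\<nu>\<in>B. finite \<nu>" unfolding B_def matchings_def using match_finite by blast
    have "card R = (\<Sum>\<nu>\<in>B. card \<nu>)" unfolding R_def using finB fB by (rule card_SigmaI)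
    also have "\<dots> = (\<Sum>\<nu>\<in>B. n - 1)" using cB by simp
    also have "\<dots> = (n - 1) * card B" by simp
    finally show ?thesis unfolding a_nk_def B_def by simp
  qed
  ultimately show ?thesis by simp
qed

theorem lemma2:
  fixes n k :: nat
  assumes "n > k"
  shows "a_nk n k = ((n - 1) choose k) * a_nk (n - k) 0"
  using assms
proof (induction k arbitrary: n)
  case 0 then show ?case by simp
next
  case (Suc k)
  obtain m where m: "n = Suc m" using Suc.prems by (cases n) auto
  have mk: "m > k" using Suc.prems m by simp
  have IH: "a_nk m k = ((m - 1) choose k) * a_nk (m - k) 0" using Suc.IH[OF mk] .
  have r: "Suc k * a_nk n (Suc k) = m * a_nk m k" using rec_step[of "Suc k" n] m by simp
  have b: "m * ((m - 1) choose k) = (m choose Suc k) * Suc k"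
    using Suc_times_binomial_eq[of "m - 1" k] mk by simp
  have "Suc k * a_nk n (Suc k) = m * (((m - 1) choose k) * a_nk (m - k) 0)"
    using r IH by simp
  also have "\<dots> = (m * ((m - 1) choose k)) * a_nk (m - k) 0" by (rule mult.assoc[symmetric])
  also have "\<dots> = Suc k * ((m choose Suc k) * a_nk (m - k) 0)" unfolding b by (simp only: mult.commute mult.left_commute)
  finally have "a_nk n (Suc k) = (m choose Suc k) * a_nk (m - k) 0"
    by (rule mult_left_cancel[THEN iffD1, rotated]) simp
  then show ?case using m by simp
qed

end
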